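(* The sets $H_\pm$ intersect $\partial(T^*E_{2\delta_0}\times\mathbb{R})\subset J^1(S)$ transversely. Moreover, $H_\pm(2\delta_0)$ is invariant under the Reeb flow of $dz-p\,dq$, and its projection $\overline H_\pm(2\delta_0)\subset T^*E_{2\delta_0}$ is a smooth $J_0$-complex subvariety.
   Context: $\alpha_0=dx_3-x_2\,dx_1+x_1\,dx_2$ on $\mathbb{R}^3$. Fix $\delta_0>0$ and let $S\subset\mathbb{R}^3$ be the smooth boundary of a compact convex set containing the origin in its interior, symmetric under reflection in the $y_1y_2$-plane and rotations about the $y_3$-axis, such that $S\cap\{y_1^2+y_2^2\le 9\delta_0^2\}=\{(y_1,y_2,\pm1): y_1^2+y_2^2\le 9\delta_0^2\}$; $\nu$ is the outward unit normal. For $0<k<3$ put $E_{k\delta_0}=\{(y_1,y_2,\pm1): y_1^2+y_2^2\le k^2\delta_0^2\}\subset S$. $S^*\mathbb{R}^3=\mathbb{R}^3\times S$ (contact form $y\cdot dx$) is identified with $J^1(S)=T^*S\times\mathbb{R}$ (contact form $dz-p\,dq$, $p\in T_qS$) via $(x,y)\mapsto(y,x-(x\cdot\nu(y))\nu(y),x\cdot y)$. $H_\pm=\{(x,y)\in S^*\mathbb{R}^3: y=t(-x_2,x_1,1),\ \pm t>0\}$, viewed in $J^1(S)$; $H_\pm(k\delta_0)=H_\pm\cap(T^*E_{k\delta_0}\times\mathbb{R})$; bars denote images under the projection $J^1(S)\to T^*S$. $J_0$ is the standard integrable complex structure on $T^*E_{3\delta_0}$ via the identification $((u_1,u_2,\pm1),(v_1,v_2,0))\mapsto(u_1+iv_1,u_2+iv_2)\in\mathbb{C}^2$.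 *)

theory Defs
  imports "HOL-Analysis.Analysis"
begin

definition refl3 :: "real^3 \<Rightarrow> real^3" where
  "refl3 y = vector [y$1, y$2, - y$3]"

definition rot3 :: "real \<Rightarrow> real^3 \<Rightarrow> real^3" where
  "rot3 \<theta> y = vector [cos \<theta> * y$1 - sin \<theta> * y$2, sin \<theta> * y$1 + cos \<theta> * y$2, y$3]"

definition partial3 :: "3 \<Rightarrow> (real^3 \<Rightarrow> real) \<Rightarrow> real^3 \<Rightarrow> real" where
  "partial3 i f x = (SOME d. ((\<lambda>t. f (x + t *\<^sub>R axis i 1)) has_real_derivative d) (at 0))"

definition smooth_on3 :: "(real^3) set \<Rightarrow> (real^3 \<Rightarrow> real) \<Rightarrow> bool" where
  "smooth_on3 U f \<longleftrightarrow> (\<forall>is. foldr partial3 is f differentiable_on U)"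

definition smooth_surface :: "(real^3) set \<Rightarrow> bool" where
  "smooth_surface S \<longleftrightarrow> (\<forall>y\<in>S. \<exists>U F. open U \<and> y \<in> U \<and> smooth_on3 U F \<and>
      (\<exists>i. partial3 i F y \<noteq> 0) \<and> S \<inter> U = {x\<in>U. F x = 0})"

text \<open>Standing hypotheses on (S, nu): S is the smooth boundary of a compact convex
  set K with 0 in its interior, symmetric, flat near the poles; nu is the outward
  unit normal (unit vector whose supporting half-space contains K).\<close>
definition admissible_S :: "real \<Rightarrow> (real^3) set \<Rightarrow> (real^3 \<Rightarrow> real^3) \<Rightarrow> bool" where
  "admissible_S \<delta>0 S \<nu> \<longleftrightarrow>
     (\<exists>K. compact K \<and> convex K \<and> 0 \<in> interior K \<and> S = frontier K \<and>
          (\<forall>y\<in>S. norm (\<nu> y) = 1 \<and> (\<forall>k\<in>K. \<nu> y \<bullet> (k - y) \<le> 0))) \<and>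
     smooth_surface S \<and>
     (\<forall>y. y \<in> S \<longleftrightarrow> refl3 y \<in> S) \<and>
     (\<forall>\<theta> y. y \<in> S \<longrightarrow> rot3 \<theta> y \<in> S) \<and>
     S \<inter> {y. (y$1)^2 + (y$2)^2 \<le> 9 * \<delta>0^2} =
       {y. (y$1)^2 + (y$2)^2 \<le> 9 * \<delta>0^2 \<and> (y$3 = 1 \<or> y$3 = -1)}"

definition Edisk :: "real \<Rightarrow> real \<Rightarrow> (real^3) set" where
  "Edisk \<delta>0 k = {y. (y$1)^2 + (y$2)^2 \<le> k^2 * \<delta>0^2 \<and> (y$3 = 1 \<or> y$3 = -1)}"

type_synonym jet = "(real^3) \<times> (real^3) \<times> real"

definition J1 :: "(real^3) set \<Rightarrow> (real^3 \<Rightarrow> real^3) \<Rightarrow> jet set" where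
  "J1 S \<nu> = {(q, p, z). q \<in> S \<and> p \<bullet> \<nu> q = 0}"

text \<open>The identification S^*R^3 = R^3 x S -> J^1(S).\<close>
definition Phi :: "(real^3 \<Rightarrow> real^3) \<Rightarrow> (real^3) \<times> (real^3) \<Rightarrow> jet" where
  "Phi \<nu> xy = (case xy of (x, y) \<Rightarrow> (y, x - (x \<bullet> \<nu> y) *\<^sub>R \<nu> y, x \<bullet> y))"

text \<open>H_+ for sigma = 1, H_- for sigma = -1.\<close>
definition Hset :: "(real^3) set \<Rightarrow> (real^3 \<Rightarrow> real^3) \<Rightarrow> real \<Rightarrow> jet set" where
  "Hset S \<nu> \<sigma> = Phi \<nu> ` {(x, y). y \<in> S \<and>
      (\<exists>t. \<sigma> * t > 0 \<and> y = t *\<^sub>R vector [- x$2, x$1, 1])}"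

definition TEz :: "(real^3) set \<Rightarrow> (real^3 \<Rightarrow> real^3) \<Rightarrow> real \<Rightarrow> real \<Rightarrow> jet set" where
  "TEz S \<nu> \<delta>0 k = {w \<in> J1 S \<nu>. fst w \<in> Edisk \<delta>0 k}"

definition proj :: "jet \<Rightarrow> (real^3) \<times> (real^3)" where
  "proj w = (fst w, fst (snd w))"

definition tangent_vecs :: "'a::real_normed_vector set \<Rightarrow> 'a \<Rightarrow> 'a set" where
  "tangent_vecs A a = {v. \<exists>\<gamma>. (\<forall>t. \<gamma> t \<in> A) \<and> \<gamma> 0 = a \<and> (\<gamma> has_vector_derivative v) (at 0)}"

definition transversal_in :: "'a::real_normed_vector set \<Rightarrow> 'a set \<Rightarrow> 'a set \<Rightarrow> bool" where
  "transversal_in M A B \<longleftrightarrow> (\<forall>a \<in> A \<inter> B.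
     {u + v | u v. u \<in> tangent_vecs A a \<and> v \<in> tangent_vecs B a} = tangent_vecs M a)"

definition alpha :: "jet \<Rightarrow> jet \<Rightarrow> real" where
  "alpha w X = snd (snd X) - fst (snd w) \<bullet> fst X"

definition dalpha :: "jet \<Rightarrow> jet \<Rightarrow> real" where
  "dalpha X Y = fst X \<bullet> fst (snd Y) - fst Y \<bullet> fst (snd X)"

definition is_reeb :: "jet set \<Rightarrow> jet \<Rightarrow> jet \<Rightarrow> bool" where
  "is_reeb M w R \<longleftrightarrow> R \<in> tangent_vecs M w \<and> alpha w R = 1 \<and>
      (\<forall>Y \<in> tangent_vecs M w. dalpha R Y = 0)"

definition reeb_invariant :: "jet set \<Rightarrow> jet set \<Rightarrow> bool" where
  "reeb_invariant M A \<longleftrightarrow> (\<forall>\<gamma>. (\<forall>s. \<gamma> s \<in> M \<and>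
        (\<exists>R. (\<gamma> has_vector_derivative R) (at s) \<and> is_reeb M (\<gamma> s) R)) \<and> \<gamma> 0 \<in> A
      \<longrightarrow> (\<forall>s. \<gamma> s \<in> A))"

definition cx_chart :: "(real^3) \<times> (real^3) \<Rightarrow> complex \<times> complex" where
  "cx_chart qp = (Complex (fst qp $ 1) (snd qp $ 1), Complex (fst qp $ 2) (snd qp $ 2))"

definition smooth_cx_subvariety :: "(complex \<times> complex) set \<Rightarrow> (complex \<times> complex) set \<Rightarrow> bool" where
  "smooth_cx_subvariety D X \<longleftrightarrow> X \<subseteq> D \<and> closedin (top_of_set D) X \<and>
     (\<forall>a\<in>X. \<exists>U F F'. open U \<and> a \<in> U \<and>
        (\<forall>w\<in>U. (F has_derivative F' w) (at w) \<and>
           (\<forall>c v1 v2. F' w (c * v1, c * v2) = c * F' w (v1, v2))) \<and>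
        F' a \<noteq> (\<lambda>_. 0) \<and>
        X \<inter> U = {w \<in> D \<inter> U. F w = 0})"

text \<open>T^*E is a disjoint union of two sheets (q3 = 1 and q3 = -1), each
  identified with a domain in C^2.\<close>
definition cx_subvariety_TE :: "((real^3) \<times> (real^3)) set \<Rightarrow> ((real^3) \<times> (real^3)) set \<Rightarrow> bool" where
  "cx_subvariety_TE T X \<longleftrightarrow> X \<subseteq> T \<and> (\<forall>\<tau>\<in>{1, -1::real}.
      smooth_cx_subvariety (cx_chart ` {qp \<in> T. fst qp $ 3 = \<tau>})
                            (cx_chart ` {qp \<in> X. fst qp $ 3 = \<tau>}))"

end

theory Submission
  imports Defs
begin

lemma vec3_eq: "(u::real^3) = v \<longleftrightarrow> u$1 = v$1 \<and> u$2 = v$2 \<and> u$3 = v$3"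
  by (simp add: vec_eq_iff forall_3)

lemma inner3: "(u::real^3) \<bullet> v = u$1 * v$1 + u$2 * v$2 + u$3 * v$3"
  by (simp add: inner_vec_def sum_3)

definition cyl :: "real \<Rightarrow> real^3 \<Rightarrow> bool" where
  "cyl d y \<longleftrightarrow> (y$1)^2 + (y$2)^2 < 9 * d^2"

lemma open_cyl: "open {y. cyl d y}"
  unfolding cyl_def by (intro open_Collect_less continuous_intros)

lemma open_cylJ: "open {w::jet. cyl d (fst w)}"
proof -
  have "{w::jet. cyl d (fst w)} = fst -` {y. cyl d y}" by auto
  thus ?thesis using open_cyl open_vimage_fst by metis
qed

lemma adm_S_in:
  assumes "admissible_S d S \<nu>" "cyl d y" "y$3 = 1 \<or> y$3 = -1"
  shows "y \<in> S"
proof -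
  have "y \<in> S \<inter> {y. (y$1)^2 + (y$2)^2 \<le> 9 * d^2}"
    using assms unfolding admissible_S_def cyl_def by auto
  thus ?thesis by auto
qed

lemma adm_S_flat:
  assumes "admissible_S d S \<nu>" "y \<in> S" "cyl d y"
  shows "y$3 = 1 \<or> y$3 = -1"
proof -
  have "y \<in> S \<inter> {y. (y$1)^2 + (y$2)^2 \<le> 9 * d^2}"
    using assms unfolding cyl_def by auto
  thus ?thesis using assms(1) unfolding admissible_S_def by auto
qed

lemma adm_nu:
  assumes adm: "admissible_S d S \<nu>" and yS: "y \<in> S" and cy: "cyl d y"
  shows "\<nu> y = vector [0, 0, y$3]"
proof -
  obtain K where K: "compact K" "S = frontier K"
     "\<forall>y\<in>S. norm (\<nu> y) = 1 \<and> (\<forall>k\<in>K. \<nu> y \<bullet> (k - y) \<le> 0)" "0 \<in> interior K"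
    using adm unfolding admissible_S_def by blast
  have SK: "S \<subseteq> K" using K(1,2) compact_imp_closed frontier_subset_closed by blast
  have y3: "y$3 = 1 \<or> y$3 = -1" using adm_S_flat[OF adm yS cy] .
  obtain e where e: "e > 0" "ball y e \<subseteq> {y. cyl d y}"
    using open_cyl[of d] cy by (meson mem_Collect_eq open_contains_ball)
  have comp: "\<nu> y $ i = 0" if i: "i = 1 \<or> i = 2" for i
  proof -
    have le: "\<nu> y $ i * s \<le> 0" if s: "\<bar>s\<bar> < e" for s
    proof -
      have ax: "axis i s = s *\<^sub>R axis i (1::real)" by (simp add: vec_eq_iff axis_def)
      have "dist y (y + axis i s) < e" using s by (simp add: dist_norm ax norm_axis_1)
      hence "cyl d (y + axis i s)" using e by auto
      moreover have "(y + axis i s) $ 3 = y $ 3" using i by (auto simp: axis_def)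
      ultimately have "y + axis i s \<in> S" using adm_S_in[OF adm] y3 by auto
      hence "y + axis i s \<in> K" using SK by auto
      hence "\<nu> y \<bullet> (y + axis i s - y) \<le> 0" using K(3) yS by blast
      thus ?thesis by (simp add: inner_axis)
    qed
    have a: "\<nu> y $ i * (e/2) \<le> 0" using le[of "e/2"] e by auto
    have b: "\<nu> y $ i * (-e/2) \<le> 0" using le[of "-e/2"] e by auto
    from a b
    have a2: "\<nu> y $ i * e \<le> 0" using a e(1) by (simp add: mult_le_0_iff)
    have b2: "\<nu> y $ i * e \<ge> 0" using b e(1) by (simp add: mult_le_0_iff)
    have "\<nu> y $ i * e = 0" using a2 b2 by linarith
    thus ?thesis using e(1) by simp
  qed
  have n1: "\<nu> y $ 1 = 0" "\<nu> y $ 2 = 0" using comp by auto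
  have "norm (\<nu> y) = 1" using K(3) yS by blast
  hence "\<nu> y \<bullet> \<nu> y = 1" by (simp add: norm_eq_1)
  hence sq: "(\<nu> y $ 3)^2 = 1" using n1 by (simp add: inner3 power2_eq_square)
  have "0 \<in> K" using K(4) interior_subset by blast
  hence "\<nu> y \<bullet> (0 - y) \<le> 0" using K(3) yS by blast
  hence "\<nu> y $ 3 * y $ 3 \<ge> 0" using n1 by (simp add: inner3)
  hence "\<nu> y $ 3 = y $ 3" using sq y3
    by (smt (verit, best) mult_minus_right mult_cancel_left1 power2_eq_1_iff)
  thus ?thesis using n1 by (simp add: vec3_eq)
qed


lemma M_loc:
  assumes adm: "admissible_S d S \<nu>" and cy: "cyl d q"
  shows "(q,p,z) \<in> J1 S \<nu> \<longleftrightarrow> (q$3 = 1 \<or> q$3 = -1) \<and> p$3 = 0"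
proof
  assume h: "(q,p,z) \<in> J1 S \<nu>"
  hence qS: "q \<in> S" and "p \<bullet> \<nu> q = 0" unfolding J1_def by auto
  moreover have "\<nu> q = vector [0,0,q$3]" using adm_nu[OF adm qS cy] .
  moreover have f: "q$3 = 1 \<or> q$3 = -1" using adm_S_flat[OF adm qS cy] .
  ultimately have "p$3 * q$3 = 0" by (simp add: inner3)
  thus "(q$3 = 1 \<or> q$3 = -1) \<and> p$3 = 0" using f by auto
next
  assume h: "(q$3 = 1 \<or> q$3 = -1) \<and> p$3 = 0"
  hence qS: "q \<in> S" using adm_S_in[OF adm cy] by auto
  have "\<nu> q = vector [0,0,q$3]" using adm_nu[OF adm qS cy] .
  thus "(q,p,z) \<in> J1 S \<nu>" using qS h unfolding J1_def by (simp add: inner3)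
qed

lemma H_loc:
  assumes adm: "admissible_S d S \<nu>" and sg: "\<sigma> = 1 \<or> \<sigma> = -1" and cy: "cyl d q"
  shows "(q,p,z) \<in> Hset S \<nu> \<sigma> \<longleftrightarrow> q$3 = \<sigma> \<and> p = vector [\<sigma> * q$2, - \<sigma> * q$1, 0]"
proof
  assume "(q,p,z) \<in> Hset S \<nu> \<sigma>"
  then obtain x y t where y: "y \<in> S" "\<sigma> * t > 0" "y = t *\<^sub>R vector [- x$2, x$1, 1]"
    and e: "(q,p,z) = Phi \<nu> (x,y)"
    unfolding Hset_def by auto
  have qy: "q = y" and pe: "p = x - (x \<bullet> \<nu> y) *\<^sub>R \<nu> y" using e unfolding Phi_def by auto
  have f: "q$3 = 1 \<or> q$3 = -1" using adm_S_flat[OF adm] y(1) qy cy by auto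
  have nu: "\<nu> y = vector [0,0,y$3]" using adm_nu[OF adm y(1)] qy cy by auto
  have t: "y$3 = t" using y(3) by simp
  have ts: "t = \<sigma>" using f qy t sg y(2) by (auto simp: mult_less_0_iff zero_less_mult_iff)
  have y12: "y$1 = - \<sigma> * x$2" "y$2 = \<sigma> * x$1" using y(3) ts by auto
  have x12: "x$1 = \<sigma> * y$2" "x$2 = - \<sigma> * y$1" using y12 sg by auto
  have "p = vector [\<sigma> * q$2, - \<sigma> * q$1, 0]"
    using x12 qy t ts sg unfolding pe nu by (auto simp: vec3_eq inner3)
  thus "q$3 = \<sigma> \<and> p = vector [\<sigma> * q$2, - \<sigma> * q$1, 0]" using qy t ts by simp
next
  assume h: "q$3 = \<sigma> \<and> p = vector [\<sigma> * q$2, - \<sigma> * q$1, 0]"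
  have qS: "q \<in> S" using adm_S_in[OF adm cy] h sg by auto
  have nu: "\<nu> q = vector [0,0,\<sigma>]" using adm_nu[OF adm qS cy] h by simp
  define x where "x = (vector [\<sigma> * q$2, - \<sigma> * q$1, \<sigma> * z] :: real^3)"
  have s2: "\<sigma> * \<sigma> = 1" using sg by auto
  have yq: "q = \<sigma> *\<^sub>R vector [- x$2, x$1, 1]"
    using h s2 unfolding x_def by (auto simp: vec3_eq algebra_simps)
  have "Phi \<nu> (x, q) = (q,p,z)"
    using h s2 unfolding Phi_def x_def by (auto simp: nu vec3_eq inner3 algebra_simps)
  moreover have "\<sigma> * \<sigma> > 0" using s2 by simp
  ultimately show "(q,p,z) \<in> Hset S \<nu> \<sigma>" unfolding Hset_def using qS yq
    by (auto intro!: image_eqI[where x="(x,q)"])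
qed


lemma tangent_lower:
  fixes w v :: "'a::real_normed_vector"
  assumes U: "open U" "w \<in> U" and A: "\<And>s. w + s *\<^sub>R v \<in> U \<Longrightarrow> w + s *\<^sub>R v \<in> A"
  shows "v \<in> tangent_vecs A w"
proof -
  obtain e where e: "e > 0" "ball w e \<subseteq> U" using U open_contains_ball by blast
  define r where "r = e / (norm v + 1)"
  have n1: "norm v + 1 > 0" by (smt (verit) norm_ge_zero)
  have r: "r > 0" using e n1 by (simp add: r_def)
  have rv: "r * norm v < e"
  proof -
    have "r * norm v < r * (norm v + 1)" using r by simp
    also have "\<dots> = e" unfolding r_def using n1 by simp
    finally show ?thesis .
  qed
  define \<gamma> where "\<gamma> = (\<lambda>t. w + (r * sin (t / r)) *\<^sub>R v)"
  have "\<gamma> t \<in> A" for t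
  proof -
    have "\<bar>r * sin (t/r)\<bar> \<le> r" using r by (simp add: abs_mult)
    hence "\<bar>r * sin (t/r)\<bar> * norm v \<le> r * norm v" by (simp add: mult_right_mono)
    hence "dist w (\<gamma> t) < e" using rv by (simp add: \<gamma>_def dist_norm)
    hence "\<gamma> t \<in> U" using e by auto
    thus ?thesis using A unfolding \<gamma>_def by blast
  qed
  moreover have "\<gamma> 0 = w" by (simp add: \<gamma>_def)
  moreover have "(\<gamma> has_vector_derivative v) (at 0)"
  proof -
    have d: "((\<lambda>t. r * sin (t / r)) has_real_derivative 1) (at 0)"
      using r by (auto intro!: derivative_eq_intros)[1]
    have "((\<lambda>t. (r * sin (t / r)) *\<^sub>R v) has_vector_derivative (1 *\<^sub>R v)) (at 0)"
      using has_vector_derivative_scaleR[OF d has_vector_derivative_const[of v]] by simp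
    hence "((\<lambda>t. w + (r * sin (t / r)) *\<^sub>R v) has_vector_derivative (0 + 1 *\<^sub>R v)) (at 0)"
      by (intro has_vector_derivative_add has_vector_derivative_const)
    thus ?thesis by (simp add: \<gamma>_def)
  qed
  ultimately show ?thesis unfolding tangent_vecs_def mem_Collect_eq by (intro exI[of _ \<gamma>]) simp
qed

lemma tangent_upper:
  fixes w v :: "'a::real_normed_vector" and l :: "'a \<Rightarrow> real"
  assumes v: "v \<in> tangent_vecs A w" and U: "open U" "w \<in> U" and l: "bounded_linear l"
    and c: "\<And>u. u \<in> A \<Longrightarrow> u \<in> U \<Longrightarrow> l u = l w"
  shows "l v = 0"
proof -
  have "\<exists>\<gamma>. (\<forall>t. \<gamma> t \<in> A) \<and> \<gamma> 0 = w \<and> (\<gamma> has_vector_derivative v) (at 0)"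
    using v unfolding tangent_vecs_def by simp
  then obtain \<gamma> where g: "\<forall>t. \<gamma> t \<in> A" "\<gamma> 0 = w" "(\<gamma> has_vector_derivative v) (at 0)"
    by blast
  have "isCont \<gamma> 0" using has_vector_derivative_continuous[OF g(3)] .
  hence "(\<gamma> \<longlongrightarrow> w) (at 0)" using g(2) by (simp add: isCont_def)
  hence ev: "eventually (\<lambda>t. \<gamma> t \<in> U) (at 0)" using topological_tendstoD U(1) U(2) by fast
  have ev2: "eventually (\<lambda>t. l (\<gamma> t) = l w) (at 0)"
    using ev by eventually_elim (use g(1) c in auto)
  have d1: "((\<lambda>t. l (\<gamma> t)) has_derivative (\<lambda>h. l (h *\<^sub>R v))) (at 0)"
    using bounded_linear.has_derivative[OF l g(3)[unfolded has_vector_derivative_def]] .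
  have d2: "((\<lambda>t. l w) has_derivative (\<lambda>h. l (h *\<^sub>R v))) (at 0)"
    using has_derivative_transform_eventually[OF d1 ev2] g(2) by simp
  have d3: "((\<lambda>t. l w) has_derivative (\<lambda>h. 0)) (at 0)" by simp
  have "(\<lambda>h. l (h *\<^sub>R v)) = (\<lambda>h. 0)" using has_derivative_unique[OF d2 d3] .
  hence "l (1 *\<^sub>R v) = 0" by metis
  thus ?thesis by simp
qed

lemma tangent_mono: "A \<subseteq> B \<Longrightarrow> tangent_vecs A w \<subseteq> tangent_vecs B w"
  apply (rule subsetI)
  subgoal premises prems for v
  proof -
  have AB: "A \<subseteq> B" and vv: "v \<in> tangent_vecs A w" using prems by auto
  from vv obtain \<gamma> where g: "\<forall>t. \<gamma> t \<in> A" "\<gamma> 0 = w" "(\<gamma> has_vector_derivative v) (at 0)"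
    unfolding tangent_vecs_def by auto
  have "\<forall>t. \<gamma> t \<in> B" using g(1) AB by auto
  thus "v \<in> tangent_vecs B w" unfolding tangent_vecs_def mem_Collect_eq using g(2,3) by (intro exI[of _ \<gamma>]) simp
  qed
  done


lemma bl3: "bounded_linear (\<lambda>u::jet. fst u $ i)" "bounded_linear (\<lambda>u::jet. fst (snd u) $ i)"
  by (auto intro!: bounded_linear_compose[OF bounded_linear_vec_nth] bounded_linear_fst
      bounded_linear_compose[OF bounded_linear_fst] bounded_linear_snd)

lemma TM:
  assumes adm: "admissible_S d S \<nu>" and wM: "w \<in> J1 S \<nu>" and cy: "cyl d (fst w)"
  shows "tangent_vecs (J1 S \<nu>) w = {v. fst v $ 3 = 0 \<and> fst (snd v) $ 3 = 0}"
proof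
  obtain q p z where w: "w = (q,p,z)" by (cases w) auto
  have loc: "q$3 = 1 \<or> q$3 = -1" "p$3 = 0" using M_loc[OF adm] wM cy w by auto
  show "{v. fst v $ 3 = 0 \<and> fst (snd v) $ 3 = 0} \<subseteq> tangent_vecs (J1 S \<nu>) w"
  proof
    fix v :: jet assume v: "v \<in> {v. fst v $ 3 = 0 \<and> fst (snd v) $ 3 = 0}"
    obtain a b c where vv: "v = (a,b,c)" by (cases v) auto
    show "v \<in> tangent_vecs (J1 S \<nu>) w"
    proof (rule tangent_lower[OF open_cylJ[of d]])
      show "w \<in> {w. cyl d (fst w)}" using cy by simp
      fix s assume "w + s *\<^sub>R v \<in> {w. cyl d (fst w)}"
      hence "cyl d (q + s *\<^sub>R a)" using w vv by simp
      moreover have "(q + s *\<^sub>R a) $ 3 = q $ 3" "(p + s *\<^sub>R b) $ 3 = 0" using v vv loc by auto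
      ultimately have "(q + s *\<^sub>R a, p + s *\<^sub>R b, z + s * c) \<in> J1 S \<nu>"
        using M_loc[OF adm] loc by auto
      thus "w + s *\<^sub>R v \<in> J1 S \<nu>" using w vv by simp
    qed
  qed
  show "tangent_vecs (J1 S \<nu>) w \<subseteq> {v. fst v $ 3 = 0 \<and> fst (snd v) $ 3 = 0}"
  proof
    fix v assume v: "v \<in> tangent_vecs (J1 S \<nu>) w"
    define U where "U = {u::jet. cyl d (fst u)} \<inter> {u. \<bar>fst u $ 3 - q $ 3\<bar> < 1}"
    have oU: "open U" unfolding U_def
      by (intro open_Int open_cylJ open_Collect_less continuous_intros)
    have wU: "w \<in> U" unfolding U_def using cy w by simp
    have c1: "fst u $ 3 = fst w $ 3" if "u \<in> J1 S \<nu>" "u \<in> U" for u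
    proof -
      obtain q' p' z' where u: "u = (q',p',z')" by (cases u) auto
      have "q'$3 = 1 \<or> q'$3 = -1" using M_loc[OF adm] that u unfolding U_def by auto
      moreover have "\<bar>q'$3 - q$3\<bar> < 1" using that u unfolding U_def by auto
      ultimately show ?thesis using loc u w by auto
    qed
    have c2: "fst (snd u) $ 3 = fst (snd w) $ 3" if "u \<in> J1 S \<nu>" "u \<in> U" for u
    proof -
      obtain q' p' z' where u: "u = (q',p',z')" by (cases u) auto
      have "p'$3 = 0" using M_loc[OF adm] that u unfolding U_def by auto
      thus ?thesis using loc u w by auto
    qed
    have "fst v $ 3 = 0" using tangent_upper[OF v oU wU bl3(1) c1] .
    moreover have "fst (snd v) $ 3 = 0" using tangent_upper[OF v oU wU bl3(2) c2] .
    ultimately show "v \<in> {v. fst v $ 3 = 0 \<and> fst (snd v) $ 3 = 0}" by simp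
  qed
qed

lemma TH:
  assumes adm: "admissible_S d S \<nu>" and sg: "\<sigma> = 1 \<or> \<sigma> = -1"
    and wH: "w \<in> Hset S \<nu> \<sigma>" and cy: "cyl d (fst w)"
  shows "{v. fst (snd v) = vector [\<sigma> * fst v $ 2, - \<sigma> * fst v $ 1, 0] \<and> fst v $ 3 = 0}
          \<subseteq> tangent_vecs (Hset S \<nu> \<sigma>) w"
proof
  obtain q p z where w: "w = (q,p,z)" by (cases w) auto
  have loc: "q$3 = \<sigma>" "p = vector [\<sigma> * q$2, - \<sigma> * q$1, 0]" using H_loc[OF adm sg] wH cy w by auto
  fix v :: jet assume v: "v \<in> {v. fst (snd v) = vector [\<sigma> * fst v $ 2, - \<sigma> * fst v $ 1, 0] \<and> fst v $ 3 = 0}"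
  obtain a b c where vv: "v = (a,b,c)" by (cases v) auto
  show "v \<in> tangent_vecs (Hset S \<nu> \<sigma>) w"
  proof (rule tangent_lower[OF open_cylJ[of d]])
    show "w \<in> {w. cyl d (fst w)}" using cy by simp
    fix s assume "w + s *\<^sub>R v \<in> {w. cyl d (fst w)}"
    hence "cyl d (q + s *\<^sub>R a)" using w vv by simp
    moreover have "(q + s *\<^sub>R a) $ 3 = \<sigma>"
      "p + s *\<^sub>R b = vector [\<sigma> * (q + s *\<^sub>R a)$2, - \<sigma> * (q + s *\<^sub>R a)$1, 0]"
      using v vv loc by (auto simp: vec3_eq algebra_simps)
    ultimately have "(q + s *\<^sub>R a, p + s *\<^sub>R b, z + s * c) \<in> Hset S \<nu> \<sigma>"
      using H_loc[OF adm sg] by auto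
    thus "w + s *\<^sub>R v \<in> Hset S \<nu> \<sigma>" using w vv by simp
  qed
qed


lemma H_sub_M:
  assumes adm: "admissible_S d S \<nu>"
  shows "Hset S \<nu> \<sigma> \<subseteq> J1 S \<nu>"
proof
  fix w assume "w \<in> Hset S \<nu> \<sigma>"
  then obtain x y where y: "y \<in> S" and e: "w = Phi \<nu> (x,y)" unfolding Hset_def by auto
  have "norm (\<nu> y) = 1" using adm y unfolding admissible_S_def by blast
  hence n: "\<nu> y \<bullet> \<nu> y = 1" by (simp add: norm_eq_1)
  have "(x - (x \<bullet> \<nu> y) *\<^sub>R \<nu> y) \<bullet> \<nu> y = 0"
    by (simp add: inner_diff_left n)
  thus "w \<in> J1 S \<nu>" using y e unfolding J1_def Phi_def by simp
qed

definition rad :: "real^3 \<Rightarrow> real" where "rad q = (q$1)^2 + (q$2)^2"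

lemma TEz_char:
  assumes adm: "admissible_S d S \<nu>" and d: "d > 0"
  shows "TEz S \<nu> d 2 = {u \<in> J1 S \<nu>. rad (fst u) \<le> 4 * d^2}"
proof -
  have "fst u \<in> Edisk d 2 \<longleftrightarrow> rad (fst u) \<le> 4 * d^2" if u: "u \<in> J1 S \<nu>" for u
  proof -
    obtain q p z where uu: "u = (q,p,z)" by (cases u) auto
    have "rad q \<le> 4 * d^2 \<Longrightarrow> cyl d q" using d unfolding rad_def cyl_def by (smt (verit) zero_less_power)
    hence "rad q \<le> 4 * d^2 \<Longrightarrow> q$3 = 1 \<or> q$3 = -1" using M_loc[OF adm] u uu by blast
    thus ?thesis unfolding Edisk_def rad_def uu by auto
  qed
  thus ?thesis unfolding TEz_def by auto
qed

lemma B_char: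
  assumes adm: "admissible_S d S \<nu>" and d: "d > 0"
  shows "(top_of_set (J1 S \<nu>)) frontier_of (TEz S \<nu> d 2) = {u \<in> J1 S \<nu>. rad (fst u) = 4 * d^2}"
    (is "?B = ?R")
proof -
  let ?M = "J1 S \<nu>"
  let ?X = "top_of_set ?M"
  have T: "TEz S \<nu> d 2 = {u \<in> ?M. rad (fst u) \<le> 4 * d^2}" using TEz_char[OF adm d] .
  have clT: "closedin ?X (TEz S \<nu> d 2)"
  proof -
    have "closed {u::jet. rad (fst u) \<le> 4 * d^2}" unfolding rad_def
      by (intro closed_Collect_le continuous_intros)
    hence "closedin ?X (?M \<inter> {u::jet. rad (fst u) \<le> 4 * d^2})" by (rule closedin_closed_Int)
    moreover have "?M \<inter> {u::jet. rad (fst u) \<le> 4 * d^2} = TEz S \<nu> d 2" using T by auto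
    ultimately show ?thesis by simp
  qed
  have cl: "?X closure_of (TEz S \<nu> d 2) = TEz S \<nu> d 2" using clT by (simp add: closure_of_eq)
  have int1: "u \<in> ?X interior_of (TEz S \<nu> d 2)" if "u \<in> ?M" "rad (fst u) < 4 * d^2" for u
  proof -
    let ?V = "?M \<inter> {u::jet. rad (fst u) < 4 * d^2}"
    have "open {u::jet. rad (fst u) < 4 * d^2}"
      unfolding rad_def by (intro open_Collect_less continuous_intros)
    hence o: "openin ?X ?V" by (rule openin_open_Int)
    have s: "?V \<subseteq> TEz S \<nu> d 2" unfolding T by auto
    have i: "u \<in> ?V" using that by simp
    show ?thesis unfolding interior_of_def mem_Collect_eq using o s i by blast
  qed
  have int2: "u \<notin> ?X interior_of (TEz S \<nu> d 2)" if u: "u \<in> ?M" "rad (fst u) = 4 * d^2" for u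
  proof
    assume "u \<in> ?X interior_of (TEz S \<nu> d 2)"
    then obtain V where V: "openin ?X V" "u \<in> V" "V \<subseteq> TEz S \<nu> d 2"
      unfolding interior_of_def by auto
    then obtain W where W: "open W" "V = W \<inter> ?M" by (auto simp: openin_open)
    obtain e where e: "e > 0" "ball u e \<subseteq> W" using W V(2) open_contains_ball by blast
    obtain q p z where uu: "u = (q,p,z)" by (cases u) auto
    define h where "h = (vector [q$1, q$2, 0] :: real^3)"
    have nh: "norm h = 2 * d"
    proof -
      have "norm h = sqrt (rad q)" unfolding h_def norm_eq_sqrt_inner rad_def
        by (simp add: inner3 power2_eq_square)
      also have "rad q = (2*d)^2" using u uu by (simp add: power_mult_distrib)
      finally show ?thesis using d by (simp only: real_sqrt_abs)
    qed
    define \<epsilon> where "\<epsilon> = min (1/4) (e / (4 * d))"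
    have ep: "\<epsilon> > 0" "\<epsilon> \<le> 1/4" "\<epsilon> \<le> e / (4*d)" using e d by (auto simp: \<epsilon>_def)
    define u' where "u' = (q + \<epsilon> *\<^sub>R h, p, z)"
    have "dist u u' = \<epsilon> * (2 * d)" unfolding u'_def uu
      using ep d by (simp add: dist_norm norm_Pair nh)
    also have "\<dots> \<le> e / (4*d) * (2*d)" using ep d by (intro mult_right_mono) auto
    also have "\<dots> < e" using d e by (simp add: field_simps)
    finally have "u' \<in> W" using e by auto
    have r0: "rad (q + \<epsilon> *\<^sub>R h) = (1 + \<epsilon>)^2 * rad q"
      unfolding rad_def h_def by (simp add: algebra_simps power2_eq_square)
    have r': "rad (q + \<epsilon> *\<^sub>R h) = (1 + \<epsilon>)^2 * (4 * d^2)"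
      using u uu r0 by simp
    have "(1 + \<epsilon>)^2 * (4 * d^2) \<le> (5/4)^2 * (4 * d^2)"
      using ep d by (intro mult_right_mono power_mono) auto
    moreover have "(5/4::real)^2 * (4 * d^2) = 25/4 * d^2" by (simp add: field_simps)
    moreover have "d^2 > 0" using d by simp
    ultimately have "cyl d (q + \<epsilon> *\<^sub>R h)" using r' unfolding cyl_def rad_def
      by linarith
    moreover have "(q + \<epsilon> *\<^sub>R h) $ 3 = q $ 3" unfolding h_def by simp
    moreover have "cyl d q" using u uu \<open>d^2 > 0\<close> unfolding cyl_def rad_def by simp
    ultimately have "u' \<in> ?M" using M_loc[OF adm] u uu unfolding u'_def by auto
    hence "u' \<in> TEz S \<nu> d 2" using \<open>u' \<in> W\<close> W V by auto
    hence "rad (q + \<epsilon> *\<^sub>R h) \<le> 4 * d^2" using T unfolding u'_def by auto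
    moreover have "(1 + \<epsilon>)^2 * (4 * d^2) > 1 * (4 * d^2)"
    proof (intro mult_strict_right_mono)
      have "1 * 1 < (1 + \<epsilon>) * (1 + \<epsilon>)" using ep by (intro mult_strict_mono) auto
      thus "1 < (1 + \<epsilon>)^2" by (simp add: power2_eq_square)
      show "0 < 4 * d^2" using d by simp
    qed
    ultimately show False using r' by simp
  qed
  show ?thesis
  proof (intro set_eqI iffI)
    fix u assume "u \<in> ?B"
    hence u: "u \<in> TEz S \<nu> d 2" "u \<notin> ?X interior_of (TEz S \<nu> d 2)"
      unfolding frontier_of_def cl by auto
    have uM: "u \<in> ?M" and le: "rad (fst u) \<le> 4 * d^2" using u(1) T by auto
    have "\<not> rad (fst u) < 4 * d^2" using int1[OF uM] u(2) by blast
    thus "u \<in> ?R" using uM le by simp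
  next
    fix u assume "u \<in> ?R"
    thus "u \<in> ?B" unfolding frontier_of_def cl using int2 T by auto
  qed
qed


lemma transv:
  assumes adm: "admissible_S d S \<nu>" and d: "d > 0" and sg: "\<sigma> = 1 \<or> \<sigma> = -1"
  shows "transversal_in (J1 S \<nu>) (Hset S \<nu> \<sigma>)
           ((subtopology euclidean (J1 S \<nu>)) frontier_of (TEz S \<nu> d 2))"
  unfolding transversal_in_def
proof
  let ?M = "J1 S \<nu>" and ?H = "Hset S \<nu> \<sigma>"
  let ?B = "(subtopology euclidean (J1 S \<nu>)) frontier_of (TEz S \<nu> d 2)"
  have B: "?B = {u \<in> ?M. rad (fst u) = 4 * d^2}" using B_char[OF adm d] by simp
  fix w assume w: "w \<in> ?H \<inter> ?B"
  obtain q p z where ww: "w = (q,p,z)" by (cases w) auto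
  have wM: "w \<in> ?M" and rq: "rad q = 4 * d^2" using w B ww by auto
  have "d^2 > 0" using d by simp
  hence cy: "cyl d q" using rq unfolding cyl_def rad_def by simp
  have cyw: "cyl d (fst w)" using cy ww by simp
  have loc: "q$3 = 1 \<or> q$3 = -1" "p$3 = 0" using M_loc[OF adm cy] wM ww by auto
  have TMw: "tangent_vecs ?M w = {v. fst v $ 3 = 0 \<and> fst (snd v) $ 3 = 0}" using TM[OF adm wM cyw] .
  have HM: "?H \<subseteq> ?M" using H_sub_M[OF adm] .
  have BM: "?B \<subseteq> ?M" using B by auto
  have TB: "(0, b, c) \<in> tangent_vecs ?B w" if b: "b $ 3 = 0" for b c
  proof (rule tangent_lower[of UNIV])
    fix s :: real
    have "(q, p + s *\<^sub>R b, z + s * c) \<in> ?M" using M_loc[OF adm cy] loc b by simp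
    hence "(q, p + s *\<^sub>R b, z + s * c) \<in> ?B" using B rq by simp
    thus "w + s *\<^sub>R (0, b, c) \<in> ?B" using ww by simp
  qed auto
  show "{u + v |u v. u \<in> tangent_vecs ?H w \<and> v \<in> tangent_vecs ?B w} = tangent_vecs ?M w"
  proof (intro set_eqI iffI)
    fix x assume "x \<in> {u + v |u v. u \<in> tangent_vecs ?H w \<and> v \<in> tangent_vecs ?B w}"
    then obtain u v where uv: "x = u + v" "u \<in> tangent_vecs ?H w" "v \<in> tangent_vecs ?B w" by blast
    have "u \<in> tangent_vecs ?M w" using uv(2) tangent_mono[OF HM] by blast
    moreover have "v \<in> tangent_vecs ?M w" using uv(3) tangent_mono[OF BM] by blast
    ultimately show "x \<in> tangent_vecs ?M w" using uv(1) unfolding TMw by simp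
  next
    fix x assume "x \<in> tangent_vecs ?M w"
    hence x: "fst x $ 3 = 0" "fst (snd x) $ 3 = 0" unfolding TMw by auto
    obtain a b c where xx: "x = (a,b,c)" by (cases x) auto
    define b' where "b' = (vector [\<sigma> * a$2, - \<sigma> * a$1, 0] :: real^3)"
    have wH: "w \<in> ?H" using w by blast
    have "(a, b', 0) \<in> {v. fst (snd v) = vector [\<sigma> * fst v $ 2, - \<sigma> * fst v $ 1, 0] \<and> fst v $ 3 = 0}"
      using x xx unfolding b'_def by simp
    hence "(a, b', 0) \<in> tangent_vecs ?H w" using TH[OF adm sg wH cyw] by blast
    moreover have "(0, b - b', c) \<in> tangent_vecs ?B w"
      using TB x xx unfolding b'_def by simp
    moreover have "x = (a, b', 0) + (0, b - b', c)" using xx by simp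
    ultimately show "x \<in> {u + v |u v. u \<in> tangent_vecs ?H w \<and> v \<in> tangent_vecs ?B w}" by blast
  qed
qed


lemma Reeb0:
  assumes adm: "admissible_S d S \<nu>" and wM: "w \<in> J1 S \<nu>" and cy: "cyl d (fst w)"
    and R: "is_reeb (J1 S \<nu>) w R"
  shows "fst R = 0 \<and> fst (snd R) = 0"
proof -
  have TMw: "tangent_vecs (J1 S \<nu>) w = {v. fst v $ 3 = 0 \<and> fst (snd v) $ 3 = 0}" using TM[OF adm wM cy] .
  obtain a b c where RR: "R = (a,b,c)" by (cases R) auto
  have R3: "a $ 3 = 0" "b $ 3 = 0" using R RR TMw unfolding is_reeb_def by auto
  have orth: "dalpha R Y = 0" if "fst Y $ 3 = 0" "fst (snd Y) $ 3 = 0" for Y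
  proof -
    have YT: "Y \<in> tangent_vecs (J1 S \<nu>) w" by (simp add: TMw that)
    thus ?thesis using R unfolding is_reeb_def by blast
  qed
  have ai: "a $ i = 0" if i: "i = 1 \<or> i = 2" for i
  proof -
    have "dalpha R (0, axis i 1, 0) = 0" using orth i by (auto simp: axis_def)
    thus ?thesis using RR by (simp add: dalpha_def inner_axis)
  qed
  have bi: "b $ i = 0" if i: "i = 1 \<or> i = 2" for i
  proof -
    have "dalpha R (axis i 1, 0, 0) = 0" using orth i by (auto simp: axis_def)
    thus ?thesis using RR by (simp add: dalpha_def inner_axis')
  qed
  have "a = 0" using ai R3 by (simp add: vec3_eq)
  moreover have "b = 0" using bi R3 by (simp add: vec3_eq)
  ultimately show ?thesis using RR by simp
qed

lemma reeb_inv: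
  assumes adm: "admissible_S d S \<nu>" and d: "d > 0" and sg: "\<sigma> = 1 \<or> \<sigma> = -1"
  shows "reeb_invariant (J1 S \<nu>) (Hset S \<nu> \<sigma> \<inter> TEz S \<nu> d 2)"
  unfolding reeb_invariant_def
proof (intro allI impI)
  let ?M = "J1 S \<nu>"
  fix \<gamma> :: "real \<Rightarrow> jet" and s :: real
  assume h: "(\<forall>s. \<gamma> s \<in> ?M \<and> (\<exists>R. (\<gamma> has_vector_derivative R) (at s) \<and> is_reeb ?M (\<gamma> s) R))
           \<and> \<gamma> 0 \<in> Hset S \<nu> \<sigma> \<inter> TEz S \<nu> d 2"
  have gM: "\<And>s. \<gamma> s \<in> ?M" using h by blast
  have gD: "\<And>s. \<exists>R. (\<gamma> has_vector_derivative R) (at s) \<and> is_reeb ?M (\<gamma> s) R" using h by blast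
  have T: "TEz S \<nu> d 2 = {u \<in> J1 S \<nu>. rad (fst u) \<le> 4 * d^2}" using TEz_char[OF adm d] .
  define q0 where "q0 = fst (\<gamma> 0)"
  define p0 where "p0 = fst (snd (\<gamma> 0))"
  have r0: "rad q0 \<le> 4 * d^2" using h T unfolding q0_def by auto
  have dd: "d^2 > 0" using d by simp
  have cy0: "cyl d q0" using r0 dd unfolding cyl_def rad_def by linarith
  have g0: "\<gamma> 0 = (q0, p0, snd (snd (\<gamma> 0)))" unfolding q0_def p0_def by simp
  have H0: "q0 $ 3 = \<sigma> \<and> p0 = vector [\<sigma> * q0$2, - \<sigma> * q0$1, 0]"
    using H_loc[OF adm sg cy0] h g0 by (metis IntD1)
  have cont: "continuous_on UNIV \<gamma>"
  proof (intro continuous_at_imp_continuous_on ballI)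
    fix x
    obtain R where "(\<gamma> has_vector_derivative R) (at x)" using gD by blast
    thus "isCont \<gamma> x" by (rule has_vector_derivative_continuous)
  qed
  define f where "f = (\<lambda>t. (fst (\<gamma> t), fst (snd (\<gamma> t))))"
  have fcont: "continuous_on UNIV f" unfolding f_def
    by (intro continuous_intros cont)
  define C where "C = {t. f t = f 0}"
  have clC: "closed C" unfolding C_def using fcont by (intro closed_Collect_eq continuous_intros)
  have opC: "open C" unfolding open_contains_ball
  proof
    fix t assume tC: "t \<in> C"
    hence "fst (\<gamma> t) = q0" unfolding C_def f_def q0_def by simp
    hence "\<gamma> t \<in> {w. cyl d (fst w)}" using cy0 by simp
    moreover have "open (\<gamma> -` {w. cyl d (fst w)})" using open_vimage[OF open_cylJ cont] .
    ultimately obtain e where e: "e > 0" "ball t e \<subseteq> \<gamma> -` {w. cyl d (fst w)}"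
      using open_contains_ball by blast
    have "(f has_derivative (\<lambda>h. 0)) (at x within ball t e)" if x: "x \<in> ball t e" for x
    proof -
      obtain R where R: "(\<gamma> has_vector_derivative R) (at x)" "is_reeb ?M (\<gamma> x) R" using gD by blast
      have cx: "cyl d (fst (\<gamma> x))" using e x by auto
      have R0: "fst R = 0 \<and> fst (snd R) = 0" using Reeb0[OF adm gM cx R(2)] .
      have g: "(\<gamma> has_derivative (\<lambda>h. h *\<^sub>R R)) (at x)" using R(1) by (simp add: has_vector_derivative_def)
      have "(f has_derivative (\<lambda>h. (fst (h *\<^sub>R R), fst (snd (h *\<^sub>R R))))) (at x)"
        unfolding f_def by (intro has_derivative_Pair has_derivative_fst has_derivative_snd g)
      moreover have "(\<lambda>h. (fst (h *\<^sub>R R), fst (snd (h *\<^sub>R R)))) = (\<lambda>h. 0)"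
        using R0 by (simp add: zero_prod_def)
      ultimately show ?thesis by (simp add: has_derivative_at_withinI)
    qed
    then obtain c where c: "\<forall>x\<in>ball t e. f x = c"
      using has_derivative_zero_constant[of "ball t e" f] by auto
    have "f t = c" using c e by simp
    hence "ball t e \<subseteq> C" using c tC unfolding C_def by auto
    thus "\<exists>e>0. ball t e \<subseteq> C" using e by blast
  qed
  have "0 \<in> C" unfolding C_def by simp
  hence "C = UNIV" using clC opC clopen by blast
  hence fs: "fst (\<gamma> s) = q0" "fst (snd (\<gamma> s)) = p0"
    unfolding C_def f_def q0_def p0_def by (auto simp: set_eq_iff)
  have gs: "\<gamma> s = (q0, p0, snd (snd (\<gamma> s)))" using fs by (metis prod.collapse)
  have "\<gamma> s \<in> Hset S \<nu> \<sigma>" using H_loc[OF adm sg cy0] H0 gs by metis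
  moreover have "\<gamma> s \<in> TEz S \<nu> d 2" using T gM r0 fs by simp
  ultimately show "\<gamma> s \<in> Hset S \<nu> \<sigma> \<inter> TEz S \<nu> d 2" by blast
qed


lemma cx_lin:
  fixes c :: complex
  assumes c: "c \<noteq> 0" and X: "X = {w\<in>D. snd w + fst w * c = 0}"
  shows "smooth_cx_subvariety D X"
proof -
  define F where "F = (\<lambda>w::complex\<times>complex. snd w + fst w * c)"
  have bl: "bounded_linear F" unfolding F_def
    by (intro bounded_linear_add bounded_linear_snd
        bounded_linear_compose[OF bounded_linear_mult_left bounded_linear_fst])
  have XF: "X = {w\<in>D. F w = 0}" using X unfolding F_def by simp
  have "closedin (top_of_set D) X" unfolding XF
    using continuous_closedin_preimage_constant[OF linear_continuous_on[OF bl]] by blast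
  moreover have "X \<subseteq> D" using XF by auto
  moreover have "\<exists>U F F'. open U \<and> a \<in> U \<and>
        (\<forall>w\<in>U. (F has_derivative F' w) (at w) \<and>
           (\<forall>c v1 v2. F' w (c * v1, c * v2) = c * F' w (v1, v2))) \<and>
        F' a \<noteq> (\<lambda>_. 0) \<and>
        X \<inter> U = {w \<in> D \<inter> U. F w = 0}" for a
  proof (intro exI[of _ UNIV] exI[of _ F] exI[of _ "\<lambda>_. F"] conjI ballI allI)
    fix w :: "complex \<times> complex"
    show "(F has_derivative F) (at w)" using bl by (rule bounded_linear_imp_has_derivative)
    fix k v1 v2 :: complex
    show "F (k * v1, k * v2) = k * F (v1, v2)" unfolding F_def by (simp add: algebra_simps)
  next
    have "F (1, 0) \<noteq> 0" using c unfolding F_def by simp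
    thus "(\<lambda>_. F) a \<noteq> (\<lambda>_. 0)" by metis
  qed (auto simp: XF)
  ultimately show ?thesis unfolding smooth_cx_subvariety_def by blast
qed

lemma img_filter: "f ` {x \<in> A. P x \<and> Q (f x)} = {y \<in> f ` {x \<in> A. P x}. Q y}"
  by auto

lemma cx_empty: "smooth_cx_subvariety D {}"
  unfolding smooth_cx_subvariety_def by simp

lemma chart_F:
  assumes sg: "\<sigma> = 1 \<or> \<sigma> = -1"
  shows "snd (cx_chart (q,p)) + fst (cx_chart (q,p)) * (\<i> * complex_of_real \<sigma>) = 0
         \<longleftrightarrow> p$1 = \<sigma> * q$2 \<and> p$2 = - \<sigma> * q$1"
proof -
  have s2: "\<sigma> * \<sigma> = 1" using sg by auto
  have "snd (cx_chart (q,p)) + fst (cx_chart (q,p)) * (\<i> * complex_of_real \<sigma>)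
        = Complex (q$2 - \<sigma> * p$1) (p$2 + \<sigma> * q$1)"
    unfolding cx_chart_def by (simp add: complex_eq_iff)
  also have "\<dots> = 0 \<longleftrightarrow> q$2 = \<sigma> * p$1 \<and> p$2 = - \<sigma> * q$1" unfolding complex_eq_iff by auto
  also have "\<dots> \<longleftrightarrow> p$1 = \<sigma> * q$2 \<and> p$2 = - \<sigma> * q$1"
    using sg by auto
  finally show ?thesis .
qed

lemma cx_part:
  assumes adm: "admissible_S d S \<nu>" and d: "d > 0" and sg: "\<sigma> = 1 \<or> \<sigma> = -1"
  shows "cx_subvariety_TE (proj ` TEz S \<nu> d 2) (proj ` (Hset S \<nu> \<sigma> \<inter> TEz S \<nu> d 2))"
proof -
  let ?T = "proj ` TEz S \<nu> d 2" and ?X = "proj ` (Hset S \<nu> \<sigma> \<inter> TEz S \<nu> d 2)"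
  have T: "TEz S \<nu> d 2 = {u \<in> J1 S \<nu>. rad (fst u) \<le> 4 * d^2}" using TEz_char[OF adm d] .
  have dd: "d^2 > 0" using d by simp
  have Tprop: "cyl d q \<and> (q$3 = 1 \<or> q$3 = -1) \<and> p$3 = 0 \<and> (\<exists>z. (q,p,z) \<in> TEz S \<nu> d 2)"
    if qpT: "(q,p) \<in> ?T" for q p
  proof -
    obtain w where w: "w \<in> TEz S \<nu> d 2" "proj w = (q,p)" using qpT by (metis imageE)
    obtain z where wz: "w = (q,p,z)" using w(2) unfolding proj_def by (cases w) auto
    have "rad q \<le> 4 * d^2" "(q,p,z) \<in> J1 S \<nu>" using w(1) T wz by auto
    moreover have cy: "cyl d q" using calculation(1) dd unfolding cyl_def rad_def by linarith
    ultimately show ?thesis using M_loc[OF adm cy] w(1) wz by auto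
  qed
  have Xc: "(q,p) \<in> ?X \<longleftrightarrow> (q,p) \<in> ?T \<and> q$3 = \<sigma> \<and> p$1 = \<sigma> * q$2 \<and> p$2 = - \<sigma> * q$1" for q p
  proof
    assume "(q,p) \<in> ?X"
    then obtain w where w: "w \<in> Hset S \<nu> \<sigma>" "w \<in> TEz S \<nu> d 2" "proj w = (q,p)" by auto
    obtain z where wz: "w = (q,p,z)" using w(3) unfolding proj_def by (cases w) auto
    have "(q,p) \<in> ?T" by (rule image_eqI[where f=proj, OF w(3)[symmetric] w(2)])
    hence cy: "cyl d q" using Tprop by blast
    show "(q,p) \<in> ?T \<and> q$3 = \<sigma> \<and> p$1 = \<sigma> * q$2 \<and> p$2 = - \<sigma> * q$1"
      using H_loc[OF adm sg cy] w(1) wz \<open>(q,p) \<in> ?T\<close> by auto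
  next
    assume h: "(q,p) \<in> ?T \<and> q$3 = \<sigma> \<and> p$1 = \<sigma> * q$2 \<and> p$2 = - \<sigma> * q$1"
    then obtain z where z: "(q,p,z) \<in> TEz S \<nu> d 2" and cy: "cyl d q" and p3: "p$3 = 0"
      using Tprop by blast
    have "p = vector [\<sigma> * q$2, - \<sigma> * q$1, 0]" using h p3 by (simp add: vec3_eq)
    hence "(q,p,z) \<in> Hset S \<nu> \<sigma>" using H_loc[OF adm sg cy] h by simp
    hence "proj (q,p,z) \<in> ?X" using z by blast
    thus "(q,p) \<in> ?X" by (simp add: proj_def)
  qed
  have XT: "?X \<subseteq> ?T" by auto
  have sub: "smooth_cx_subvariety (cx_chart ` {qp \<in> ?T. fst qp $ 3 = \<tau>})
                            (cx_chart ` {qp \<in> ?X. fst qp $ 3 = \<tau>})" if \<tau>: "\<tau> \<in> {1, -1::real}" for \<tau>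
  proof (cases "\<tau> = \<sigma>")
    case True
    let ?c = "\<i> * complex_of_real \<sigma>"
    have c: "?c \<noteq> 0" using sg by auto
    have "cx_chart ` {qp \<in> ?X. fst qp $ 3 = \<tau>}
          = {w \<in> cx_chart ` {qp \<in> ?T. fst qp $ 3 = \<tau>}. snd w + fst w * ?c = 0}"
    proof -
      have "{qp \<in> ?X. fst qp $ 3 = \<tau>} = {qp \<in> ?T. fst qp $ 3 = \<tau> \<and>
               snd (cx_chart qp) + fst (cx_chart qp) * ?c = 0}"
      proof (intro set_eqI)
        fix qp :: "(real^3) \<times> (real^3)"
        obtain q p where qp: "qp = (q,p)" by (cases qp) auto
        show "qp \<in> {qp \<in> ?X. fst qp $ 3 = \<tau>} \<longleftrightarrow> qp \<in> {qp \<in> ?T. fst qp $ 3 = \<tau> \<and>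
               snd (cx_chart qp) + fst (cx_chart qp) * ?c = 0}"
          unfolding qp mem_Collect_eq Xc[of q p] chart_F[OF sg] using True by auto
      qed
      thus ?thesis using img_filter[of cx_chart ?T "\<lambda>qp. fst qp $ 3 = \<tau>" "\<lambda>w. snd w + fst w * ?c = 0"]
        by simp
    qed
    thus ?thesis by (rule cx_lin[OF c])
  next
    case False
    have "{qp \<in> ?X. fst qp $ 3 = \<tau>} = {}"
    proof (intro equals0I)
      fix qp assume a: "qp \<in> {qp \<in> ?X. fst qp $ 3 = \<tau>}"
      obtain q p where qp: "qp = (q,p)" by (cases qp) auto
      show False using a False unfolding qp mem_Collect_eq Xc[of q p] by simp
    qed
    hence "cx_chart ` {qp \<in> ?X. fst qp $ 3 = \<tau>} = {}" by (simp only: image_empty)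
    thus ?thesis using cx_empty by (simp only:)
  qed
  show ?thesis unfolding cx_subvariety_TE_def using XT sub by blast
qed


theorem lemma3p7:
  fixes \<delta>0 :: real and S :: "(real^3) set" and \<nu> :: "real^3 \<Rightarrow> real^3" and \<sigma> :: real
  assumes "\<delta>0 > 0"
    and "admissible_S \<delta>0 S \<nu>"
    and "\<sigma> = 1 \<or> \<sigma> = -1"
  shows "transversal_in (J1 S \<nu>) (Hset S \<nu> \<sigma>)
           ((subtopology euclidean (J1 S \<nu>)) frontier_of (TEz S \<nu> \<delta>0 2))
       \<and> reeb_invariant (J1 S \<nu>) (Hset S \<nu> \<sigma> \<inter> TEz S \<nu> \<delta>0 2)
       \<and> cx_subvariety_TE (proj ` TEz S \<nu> \<delta>0 2) (proj ` (Hset S \<nu> \<sigma> \<inter> TEz S \<nu> \<delta>0 2))"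
  using transv[OF assms(2,1,3)] reeb_inv[OF assms(2,1,3)] cx_part[OF assms(2,1,3)] by blast

end
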